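(* Let $\pi_0\neq\pi_1$ be two primes. Then there exist uncountably many irrational real numbers $x$ with the following property: if $(q_s)_{s\ge0}$ denotes the sequence of denominators of the convergents of $x$, then for every $s\ge0$, $q_{2s}$ is a power of $\pi_0$ and $q_{2s+1}$ is a power of $\pi_1$ (with exponent $\ge1$ for $s\ge1$ resp. $s\ge0$). In particular, each $q_s$ with $s\ge1$ is divisible only by primes in $\{\pi_0,\pi_1\}$.
   Context: For an irrational $x$ with continued fraction expansion $[a_0;a_1,a_2,\dots]$, the convergents are $p_s/q_s$. They are defined by $p_{-1}=1$, $p_0=a_0$, $q_{-1}=0$, $q_0=1$, and for $s\ge1$, $p_s=a_sp_{s-1}+p_{s-2}$ and $q_s=a_sq_{s-1}+q_{s-2}$. *)

theory Defs
  imports Complex_Main "HOL-Library.Countable_Set" "HOL-Computational_Algebra.Primes"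
begin

fun cf_rem :: "real \<Rightarrow> nat \<Rightarrow> real" where
  "cf_rem x 0 = x"
| "cf_rem x (Suc n) = 1 / (cf_rem x n - of_int \<lfloor>cf_rem x n\<rfloor>)"

definition cf_coeff :: "real \<Rightarrow> nat \<Rightarrow> int" where
  "cf_coeff x n = \<lfloor>cf_rem x n\<rfloor>"

text \<open>Denominators of the convergents: q_(-1) = 0, q_0 = 1,
  q_s = a_s q_(s-1) + q_(s-2).\<close>
fun cf_den :: "real \<Rightarrow> nat \<Rightarrow> int" where
  "cf_den x 0 = 1"
| "cf_den x (Suc 0) = cf_coeff x 1"
| "cf_den x (Suc (Suc n)) = cf_coeff x (Suc (Suc n)) * cf_den x (Suc n) + cf_den x n"

end

theory Submission
  imports Defs "HOL-Number_Theory.Number_Theory"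
begin

lemma uncountable_nat_bool: "uncountable (UNIV :: (nat \<Rightarrow> bool) set)"
proof
  assume "countable (UNIV :: (nat \<Rightarrow> bool) set)"
  then obtain f :: "nat \<Rightarrow> (nat \<Rightarrow> bool)" where f: "range f = UNIV"
    using uncountable_def by blast
  then obtain k where "f k = (\<lambda>n. \<not> f n n)" by (metis UNIV_I imageE)
  then show False by (metis)
qed

fun cfv :: "(nat \<Rightarrow> real) \<Rightarrow> nat \<Rightarrow> real" where
  "cfv a 0 = a 0"
| "cfv a (Suc m) = a 0 + 1 / cfv (\<lambda>i. a (Suc i)) m"

lemma cfv_bounds: "(\<forall>i. a i \<ge> 1) \<Longrightarrow> cfv a m \<ge> a 0 \<and> cfv a m \<le> a 0 + 1"
proof (induction m arbitrary: a)
  case 0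
  then show ?case by simp
next
  case (Suc m)
  have v: "\<forall>i. a (Suc i) \<ge> 1" using Suc.prems by simp
  have h: "cfv (\<lambda>i. a (Suc i)) m \<ge> 1"
    using Suc.IH[OF v] v by (meson order_trans)
  then have "1 / cfv (\<lambda>i. a (Suc i)) m \<le> 1" "1 / cfv (\<lambda>i. a (Suc i)) m \<ge> 0" by auto
  then show ?case by simp
qed

lemma cfv_ge1: "(\<forall>i. a i \<ge> 1) \<Longrightarrow> cfv a m \<ge> 1"
proof -
  assume v: "\<forall>i. a i \<ge> 1"
  then show ?thesis using cfv_bounds[OF v, of m] v by (meson order_trans)
qed

lemma cfv_diff1: "(\<forall>i. a i \<ge> 1) \<Longrightarrow> \<bar>cfv a m - cfv a m'\<bar> \<le> 1"
  using cfv_bounds[of a m] cfv_bounds[of a m'] by auto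

lemma contract_alg:
  fixes b u' v' :: real
  assumes "b \<ge> 1" "u' \<ge> 1" "v' \<ge> 1"
  shows "\<bar>1 / (b + 1 / u') - 1 / (b + 1/v')\<bar> \<le> \<bar>u' - v'\<bar> / 4"
proof -
  have bb: "b*u' \<ge> b" "b*v' \<ge> b"
    using mult_left_mono[of 1 u' b] mult_left_mono[of 1 v' b] assms by simp_all
  have h2: "(b*u'+1) \<ge> 2" "(b*v'+1) \<ge> 2" using assms bb by linarith+
  have p: "b*u'+1 \<noteq> 0" "b*v'+1 \<noteq> 0" using h2 by linarith+
  have e1: "1 / (b + 1 / u') = u' / (b*u' + 1)" using assms by (simp add: field_simps)
  have e2: "1 / (b + 1 / v') = v' / (b*v' + 1)" using assms by (simp add: field_simps)
  have "u' / (b*u' + 1) - v' / (b*v' + 1) = (u'*(b*v'+1) - (b*u'+1)*v') / ((b*u'+1)*(b*v'+1))"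
    using diff_frac_eq[OF p] by simp
  also have "u'*(b*v'+1) - (b*u'+1)*v' = u' - v'" by (simp add: algebra_simps)
  finally have d: "u' / (b*u' + 1) - v' / (b*v' + 1) = (u' - v') / ((b*u'+1)*(b*v'+1))" .
  have four: "(b*u'+1)*(b*v'+1) \<ge> 2*2" using h2 by (intro mult_mono) auto
  have "\<bar>u' / (b*u' + 1) - v' / (b*v' + 1)\<bar> = \<bar>u' - v'\<bar> / ((b*u'+1)*(b*v'+1))"
    unfolding d using four by (simp add: abs_divide)
  also have "\<dots> \<le> \<bar>u' - v'\<bar> / 4"
    using four by (intro divide_left_mono) auto
  finally show ?thesis using e1 e2 by simp
qed

lemma cfv_contract:
  assumes "\<forall>i. a i \<ge> 1"
  shows "\<bar>cfv a (Suc (Suc m)) - cfv a (Suc (Suc m'))\<bar>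
     \<le> \<bar>cfv (\<lambda>i. a (Suc (Suc i))) m - cfv (\<lambda>i. a (Suc (Suc i))) m'\<bar> / 4"
proof -
  have v: "\<forall>i. a (Suc (Suc i)) \<ge> 1" using assms by auto
  have "cfv a (Suc (Suc m)) - cfv a (Suc (Suc m')) =
     1 / (a 1 + 1 / cfv (\<lambda>i. a (Suc (Suc i))) m) - 1 / (a 1 + 1 / cfv (\<lambda>i. a (Suc (Suc i))) m')"
    by simp
  then show ?thesis using contract_alg[of "a 1"] assms cfv_ge1[OF v] by (simp del: cfv.simps)
qed

lemma cfv_bound:
  "(\<forall>i. a i \<ge> 1) \<Longrightarrow> m \<ge> 2*k \<Longrightarrow> m' \<ge> 2*k \<Longrightarrow> \<bar>cfv a m - cfv a m'\<bar> \<le> (1/4)^k"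
proof (induction k arbitrary: a m m')
  case 0
  then show ?case using cfv_diff1 by simp
next
  case (Suc k)
  define m0 where "m0 = m - 2"
  define m1 where "m1 = m' - 2"
  have m0: "m = Suc (Suc m0)" "m0 \<ge> 2*k" using Suc.prems(2) unfolding m0_def by auto
  have m1: "m' = Suc (Suc m1)" "m1 \<ge> 2*k" using Suc.prems(3) unfolding m1_def by auto
  have v: "\<forall>i. a (Suc (Suc i)) \<ge> 1" using Suc.prems by auto
  have "\<bar>cfv a m - cfv a m'\<bar> \<le> \<bar>cfv (\<lambda>i. a (Suc (Suc i))) m0 - cfv (\<lambda>i. a (Suc (Suc i))) m1\<bar> / 4"
    using cfv_contract[OF Suc.prems(1)] m0 m1 by simp
  also have "\<dots> \<le> (1/4)^k / 4" using Suc.IH[OF v m0(2) m1(2)] by simp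
  finally show ?case by simp
qed

lemma cfv_Cauchy: assumes "\<forall>i. a i \<ge> 1" shows "Cauchy (cfv a)"
proof (rule CauchyI)
  fix e :: real assume "e > 0"
  then obtain k where k: "(1/4::real)^k < e" using real_arch_pow_inv[of e "1/4"] by auto
  show "\<exists>M. \<forall>m\<ge>M. \<forall>n\<ge>M. norm (cfv a m - cfv a n) < e"
    using cfv_bound[OF assms] k by (intro exI[of _ "2*k"]) (auto intro: le_less_trans)
qed

definition cfl :: "(nat \<Rightarrow> real) \<Rightarrow> real" where "cfl a = lim (cfv a)"

lemma cfl_lim: "\<forall>i. a i \<ge> 1 \<Longrightarrow> cfv a \<longlonglongrightarrow> cfl a"
  unfolding cfl_def using cfv_Cauchy Cauchy_convergent convergent_LIMSEQ_iff by blast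

lemma cfl_ge1: "\<forall>i. a i \<ge> 1 \<Longrightarrow> cfl a \<ge> 1"
  by (rule LIMSEQ_le_const[OF cfl_lim]) (auto intro: cfv_ge1)

lemma cfl_rec:
  assumes "\<forall>i. a i \<ge> 1"
  shows "cfl a = a 0 + 1 / cfl (\<lambda>i. a (Suc i))"
proof -
  have v: "\<forall>i. a (Suc i) \<ge> 1" using assms by auto
  have "(\<lambda>m. cfv a (Suc m)) \<longlonglongrightarrow> cfl a" using LIMSEQ_Suc[OF cfl_lim[OF assms]] .
  moreover have "(\<lambda>m. cfv a (Suc m)) \<longlonglongrightarrow> a 0 + 1 / cfl (\<lambda>i. a (Suc i))"
    unfolding cfv.simps using cfl_ge1[OF v] cfl_lim[OF v]
    by (intro tendsto_intros) auto
  ultimately show ?thesis by (rule LIMSEQ_unique)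
qed

lemma cfl_strict:
  assumes "\<forall>i. a i \<ge> 1"
  shows "a 0 < cfl a \<and> cfl a < a 0 + 1"
proof -
  have v: "\<forall>i. a (Suc i) \<ge> 1" using assms by auto
  have v2: "\<forall>i. a (Suc (Suc i)) \<ge> 1" using assms by auto
  have "cfl (\<lambda>i. a (Suc i)) = a 1 + 1 / cfl (\<lambda>i. a (Suc (Suc i)))" using cfl_rec[OF v] by simp
  moreover have "cfl (\<lambda>i. a (Suc (Suc i))) \<ge> 1" using cfl_ge1[OF v2] .
  moreover have "a 1 \<ge> 1" using assms by simp
  moreover have "1 / cfl (\<lambda>i. a (Suc (Suc i))) > 0" using cfl_ge1[OF v2] by simp
  ultimately have "cfl (\<lambda>i. a (Suc i)) > 1" by linarith
  then have "0 < 1 / cfl (\<lambda>i. a (Suc i))" "1 / cfl (\<lambda>i. a (Suc i)) < 1" by auto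
  then show ?thesis using cfl_rec[OF assms] by linarith
qed

lemma cf_rem_cfl:
  fixes A :: "nat \<Rightarrow> int"
  assumes "\<forall>i. A i \<ge> 1"
  shows "cf_rem (cfl (\<lambda>i. of_int (A i))) n = cfl (\<lambda>i. of_int (A (i + n)))
     \<and> \<lfloor>cf_rem (cfl (\<lambda>i. of_int (A i))) n\<rfloor> = A n"
proof (induction n)
  have v: "\<And>n. \<forall>i. (of_int (A (i + n)) :: real) \<ge> 1" using assms by simp
  case 0
  have "\<lfloor>cfl (\<lambda>i. of_int (A (i + 0)))\<rfloor> = A 0"
    using cfl_strict[OF v[of 0]] by (simp add: floor_eq_iff)
  then show ?case by simp
next
  have v: "\<And>n. \<forall>i. (of_int (A (i + n)) :: real) \<ge> 1" using assms by simp
  case (Suc n)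
  have r: "cfl (\<lambda>i. of_int (A (i + n))) = of_int (A n) + 1 / cfl (\<lambda>i. of_int (A (i + Suc n)))"
    using cfl_rec[OF v[of n]] by simp
  have "cf_rem (cfl (\<lambda>i. of_int (A i))) (Suc n) = 1 / (cfl (\<lambda>i. of_int (A (i + n))) - of_int (A n))"
  proof -
    have "\<lfloor>cf_rem (cfl (\<lambda>i. of_int (A i))) n\<rfloor> = A n" using Suc.IH by blast
    moreover have "cf_rem (cfl (\<lambda>i. of_int (A i))) n = cfl (\<lambda>i. of_int (A (i + n)))" using Suc.IH by blast
    ultimately show ?thesis by (simp only: cf_rem.simps)
  qed
  also have "\<dots> = cfl (\<lambda>i. of_int (A (i + Suc n)))" using cfl_ge1[OF v[of "Suc n"]] by (subst r) simp
  finally have eq: "cf_rem (cfl (\<lambda>i. of_int (A i))) (Suc n) = cfl (\<lambda>i. of_int (A (i + Suc n)))" .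
  have "\<lfloor>cfl (\<lambda>i. of_int (A (i + Suc n)))\<rfloor> = A (Suc n)"
    using cfl_strict[OF v[of "Suc n"]] by (simp add: floor_eq_iff)
  then show ?case using eq by simp
qed

lemma irrational_of_cf:
  fixes y :: real
  assumes "\<forall>n. cf_rem y n \<notin> \<int>"
  shows "y \<notin> \<rat>"
proof
  assume "y \<in> \<rat>"
  then obtain a b where ab: "b > 0" "y = of_int a / of_int b" by (metis Rats_cases')
  have key: "\<forall>n. 0 < q \<longrightarrow> of_nat q * cf_rem y n \<in> \<int> \<longrightarrow> False" for q :: nat
  proof (induction q rule: less_induct)
    case (less q)
    show ?case
    proof (intro allI impI)
      fix n assume q: "0 < q" "of_nat q * cf_rem y n \<in> \<int>"
      define t where "t = cf_rem y n"
      define f where "f = \<lfloor>t\<rfloor>"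
      obtain N where N: "of_nat q * t = of_int N" using q(2) t_def by (metis Ints_cases)
      have tf: "0 < t - of_int f" "t - of_int f < 1"
      proof -
        have "t \<noteq> of_int f" using assms t_def by (metis Ints_of_int)
        moreover have "of_int f \<le> t" unfolding f_def by (rule of_int_floor_le)
        ultimately show "0 < t - of_int f" by simp
        show "t - of_int f < 1" unfolding f_def by linarith
      qed
      define r where "r = N - int q * f"
      have "of_int r = of_int N - of_nat q * (of_int f :: real)" unfolding r_def by simp
      then have rr: "of_int r = of_nat q * (t - of_int f)" using N by (simp add: algebra_simps)
      have "0 < of_nat q * (t - of_int f)" using tf q by simp
      then have r0: "r > 0" using rr by (metis of_int_0_less_iff)
      have "of_nat q * (t - of_int f) < of_nat q" using tf q by simp
      then have r1: "r < int q" using rr by (metis of_int_less_iff of_int_of_nat_eq)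
      have nxt: "cf_rem y (Suc n) = 1 / (t - of_int f)" using t_def f_def by simp
      have "of_nat (nat r) * (1 / (t - of_int f)) = (of_nat q :: real)"
        using rr r0 tf by (simp add: field_simps)
      then have "of_nat (nat r) * cf_rem y (Suc n) = of_nat q" unfolding nxt .
      then have "of_nat (nat r) * cf_rem y (Suc n) \<in> \<int>" by simp
      moreover have "nat r < q" "0 < nat r" using r0 r1 by auto
      ultimately show False using less.IH by blast
    qed
  qed
  have "of_nat (nat b) * cf_rem y 0 \<in> \<int>" using ab by simp
  moreover have "0 < nat b" using ab by simp
  ultimately show False using key[of "nat b"] by blast
qed


locale tp =
  fixes p0 p1 :: nat
  assumes p0: "prime p0" and p1: "prime p1" and ne: "p0 \<noteq> p1"
begin

definition pr :: "nat \<Rightarrow> nat" where "pr n = (if even n then p0 else p1)"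

fun ex :: "(nat \<Rightarrow> bool) \<Rightarrow> nat \<Rightarrow> nat \<times> nat" where
  "ex c 0 = (0, if c 0 then 2 else 1)"
| "ex c (Suc n) = (snd (ex c n),
     fst (ex c n) + (if c (Suc n) then 2 else 1) * totient (pr (Suc n) ^ snd (ex c n)))"

definition E :: "(nat \<Rightarrow> bool) \<Rightarrow> nat \<Rightarrow> nat" where "E c n = fst (ex c n)"

lemma E_snd: "snd (ex c n) = E c (Suc n)"
  by (simp add: E_def)

lemma E0: "E c 0 = 0" by (simp add: E_def)
lemma E1: "E c 1 = (if c 0 then 2 else 1)" by (simp add: E_def)
lemma E_rec: "E c (Suc (Suc n)) = E c n + (if c (Suc n) then 2 else 1) * totient (pr (Suc n) ^ E c (Suc n))"
  by (simp add: E_def)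

lemma pr_SS: "pr (Suc (Suc n)) = pr n" by (simp add: pr_def)
lemma pr_prime: "prime (pr n)" using p0 p1 by (simp add: pr_def)
lemma pr_ne: "pr n \<noteq> pr (Suc n)" using ne by (simp add: pr_def)
lemma pr_gt1: "pr n > 1" using pr_prime prime_gt_1_nat by blast

lemma tot_pos: "totient (pr n ^ k) > 0"
proof -
  have "pr n > 0" using pr_gt1[of n] by linarith
  then show ?thesis by simp
qed

lemma E_Suc_ge1: "E c (Suc n) \<ge> 1"
proof (cases n)
  case 0 then show ?thesis by (simp add: E_def)
next
  case (Suc m)
  have "(if c (Suc m) then 2 else 1) * totient (pr (Suc m) ^ E c (Suc m)) \<ge> 1"
    using tot_pos[of "Suc m" "E c (Suc m)"] by (simp add: Suc_le_eq)
  then show ?thesis using Suc E_rec[of c m] by simp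
qed

definition Q :: "(nat \<Rightarrow> bool) \<Rightarrow> nat \<Rightarrow> int" where "Q c n = int (pr n ^ E c n)"

definition A :: "(nat \<Rightarrow> bool) \<Rightarrow> nat \<Rightarrow> int" where
  "A c n = (if n = 0 then 1 else if n = 1 then Q c 1 else (Q c n - Q c (n-2)) div Q c (n-1))"

lemma Q_pos: "Q c n > 0" using pr_gt1[of n] by (simp add: Q_def)

lemma Q_dvd: "Q c (Suc n) dvd Q c (Suc (Suc n)) - Q c n"
proof -
  define P where "P = pr n"
  define R where "R = pr (Suc n)"
  define i where "i = E c (Suc n)"
  define j where "j = E c n"
  define t where "t = totient (R ^ i)"
  define m :: nat where "m = (if c (Suc n) then 2 else 1)"
  have cop: "coprime P (R ^ i)"
    using primes_coprime[OF pr_prime pr_prime pr_ne[of n]] by (simp add: P_def R_def)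
  have "[P ^ t = 1] (mod R ^ i)" unfolding t_def by (rule euler_theorem[OF cop])
  then have "[(P ^ t) ^ m = 1 ^ m] (mod R ^ i)" by (rule cong_pow)
  then have "[P ^ j * (P ^ t) ^ m = P ^ j * 1 ^ m] (mod R ^ i)" by (rule cong_scalar_left)
  moreover have "P ^ (j + m * t) = P ^ j * (P ^ t) ^ m"
    by (simp add: power_add power_mult[symmetric] mult.commute)
  ultimately have "[P ^ (j + m * t) = P ^ j] (mod R ^ i)" by simp
  then have "[int (P ^ (j + m * t)) = int (P ^ j)] (mod int (R ^ i))"
    using cong_int_iff[of "P^(j+m*t)" "P^j" "R^i"] by blast
  then have "int (R ^ i) dvd int (P ^ (j + m * t)) - int (P ^ j)" by (simp add: cong_iff_dvd_diff)
  moreover have "Q c (Suc (Suc n)) = int (P ^ (j + m * t))"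
    unfolding Q_def E_rec pr_SS P_def j_def m_def t_def R_def i_def by simp
  ultimately show ?thesis by (simp add: Q_def R_def i_def P_def j_def)
qed

lemma Q_incr: "Q c (Suc (Suc n)) > Q c n"
proof -
  have "E c (Suc (Suc n)) > E c n"
    using tot_pos[of "Suc n" "E c (Suc n)"] E_rec[of c n] by simp
  then have "pr n ^ E c (Suc (Suc n)) > pr n ^ E c n"
    using pr_gt1[of n] by (simp add: power_strict_increasing)
  then show ?thesis unfolding Q_def pr_SS by (simp only: of_nat_less_iff)
qed

lemma A_ge1: "A c n \<ge> 1"
proof -
  consider "n = 0" | "n = 1" | k where "n = Suc (Suc k)" by (metis not0_implies_Suc One_nat_def)
  then show ?thesis
  proof cases
    case 1 then show ?thesis by (simp add: A_def)
  next
    case 2 then show ?thesis using Q_pos[of c 1] by (simp add: A_def)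
  next
    case 3
    obtain d where d: "Q c (Suc (Suc k)) - Q c k = Q c (Suc k) * d" using Q_dvd[of c k] by (auto elim: dvdE)
    have "Q c (Suc k) * d > 0" using d Q_incr[of c k] by simp
    then have "d > 0" using Q_pos[of c "Suc k"] by (simp add: zero_less_mult_iff)
    then show ?thesis using 3 d Q_pos[of c "Suc k"] by (simp add: A_def)
  qed
qed

definition X :: "(nat \<Rightarrow> bool) \<Rightarrow> real" where "X c = cfl (\<lambda>i. of_int (A c i))"

lemma coeff_X: "cf_coeff (X c) n = A c n"
  using cf_rem_cfl[of "A c" n] A_ge1 unfolding X_def cf_coeff_def by blast

lemma irr_X: "X c \<notin> \<rat>"
proof (rule irrational_of_cf, intro allI notI)
  fix n assume "cf_rem (X c) n \<in> \<int>"
  then have "of_int \<lfloor>cf_rem (X c) n\<rfloor> = cf_rem (X c) n" by (metis Ints_cases floor_of_int)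
  moreover have "cf_rem (X c) n = cfl (\<lambda>i. of_int (A c (i + n)))"
    using cf_rem_cfl[of "A c" n] A_ge1 unfolding X_def by blast
  moreover have "\<lfloor>cf_rem (X c) n\<rfloor> = A c n"
    using cf_rem_cfl[of "A c" n] A_ge1 unfolding X_def by blast
  moreover have "of_int (A c n) < cfl (\<lambda>i. of_int (A c (i + n)))"
    using cfl_strict[of "\<lambda>i. of_int (A c (i + n))"] A_ge1 by simp
  ultimately show False by (metis floor_of_int less_irrefl)
qed

lemma den_X: "cf_den (X c) n = Q c n"
proof (induction "X c" n rule: cf_den.induct)
  case 1 then show ?case by (simp add: Q_def E0)
next
  case 2 then show ?case by (simp add: coeff_X A_def)
next
  case (3 n)
  obtain d where d: "Q c (Suc (Suc n)) - Q c n = Q c (Suc n) * d" using Q_dvd[of c n] by (auto elim: dvdE)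
  have "A c (Suc (Suc n)) = d" unfolding A_def using d Q_pos[of c "Suc n"] by simp
  then show ?case using 3 d by (simp add: coeff_X algebra_simps)
qed

lemma inj_X: "inj X"
proof (rule injI)
  fix c c' assume "X c = X c'"
  then have Qe: "Q c n = Q c' n" for n using den_X by metis
  have Ee: "E c n = E c' n" for n
  proof -
    have "int (pr n ^ E c n) = int (pr n ^ E c' n)" using Qe[of n] by (simp only: Q_def)
    then have "pr n ^ E c n = pr n ^ E c' n" by (simp only: of_nat_eq_iff)
    then show ?thesis using pr_gt1[of n] by (simp add: power_inject_exp)
  qed
  show "c = c'"
  proof
    fix n show "c n = c' n"
    proof (cases n)
      case 0 then show ?thesis using Ee[of 1] by (auto simp: E_def split: if_splits)
    next
      case (Suc k)
      have t: "totient (pr (Suc k) ^ E c (Suc k)) > 0" by (rule tot_pos)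
      have "(if c (Suc k) then 2 else 1) * totient (pr (Suc k) ^ E c (Suc k))
          = (if c' (Suc k) then 2 else (1::nat)) * totient (pr (Suc k) ^ E c (Suc k))"
        using Ee[of "Suc (Suc k)"] Ee[of k] Ee[of "Suc k"] E_rec[of c k] E_rec[of c' k] by simp
      then show ?thesis using t Suc by (simp split: if_splits)
    qed
  qed
qed

end

theorem mainTheorem8:
  fixes p0 p1 :: nat
  assumes "prime p0" and "prime p1" and "p0 \<noteq> p1"
  shows "uncountable {x :: real. x \<notin> \<rat> \<and>
           (\<forall>s. (\<exists>k. cf_den x (2 * s) = int p0 ^ k \<and> (s \<ge> 1 \<longrightarrow> k \<ge> 1)) \<and>
                (\<exists>k\<ge>1. cf_den x (2 * s + 1) = int p1 ^ k))}"
proof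
  interpret tp p0 p1 using assms by unfold_locales
  let ?S = "{x :: real. x \<notin> \<rat> \<and>
           (\<forall>s. (\<exists>k. cf_den x (2 * s) = int p0 ^ k \<and> (s \<ge> 1 \<longrightarrow> k \<ge> 1)) \<and>
                (\<exists>k\<ge>1. cf_den x (2 * s + 1) = int p1 ^ k))}"
  assume cS: "countable ?S"
  have "range X \<subseteq> ?S"
  proof safe
    fix c
    show "X c \<in> \<rat> \<Longrightarrow> False" using irr_X by blast
    fix s
    show "\<exists>k. cf_den (X c) (2 * s) = int p0 ^ k \<and> (s \<ge> 1 \<longrightarrow> k \<ge> 1)"
    proof (intro exI conjI impI)
      show "cf_den (X c) (2 * s) = int p0 ^ E c (2 * s)" by (simp add: den_X Q_def pr_def)
      assume "s \<ge> 1"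
      then have "2 * s = Suc (2 * (s - 1) + 1)" by simp
      then show "E c (2 * s) \<ge> 1" using E_Suc_ge1[of c "2 * (s - 1) + 1"] by simp
    qed
    show "\<exists>k\<ge>1. cf_den (X c) (2 * s + 1) = int p1 ^ k"
      using E_Suc_ge1[of c "2*s"] by (intro exI[of _ "E c (2*s+1)"]) (simp add: den_X Q_def pr_def)
  qed
  then have "countable (range X)" using cS countable_subset by blast
  then have "countable (UNIV :: (nat \<Rightarrow> bool) set)" using countable_image_inj_on inj_X by blast
  then show False using uncountable_nat_bool by blast
qed

end
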